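(* Let $n\ge 2$, $d\ge1$, $r\ge3$ with $n\ge d$, $dr\equiv0\pmod n$ and $dr\ge 2n$. For every vertex $(a,x)$ of $Q_n(d,r)$ with $0\le x\le\lfloor r/2\rfloor$, $$\mathrm{dist}((0_n,0),(a,x))=\|a\|+2\lceil n/d\rceil-x-2\,\mathrm{leap}_1(a,x).$$
   Context: $\mathbb{Z}_2^n=\{0,1\}^n$ with coordinatewise addition mod 2; $e_i$ is the $i$-th standard basis vector, subscripts read modulo $n$; $\|a\|$ is the Hamming weight. The recursive cube of rings $Q_n(d,r)$ is the simple graph on $\mathbb{Z}_2^n\times\mathbb{Z}_r$ in which $(a,x)$ is adjacent to $(a+e_{i+dx},x)$ for $1\le i\le d$ and to $(a,x\pm1)$. Definition of $\mathrm{leap}_1$ (case $dr\ge 2n$): let $q=\lceil n/d\rceil$, $s=\|a\|$, and let $i_1<i_2<\dots<i_s$ be the indices with $a_i=1$. Put $y_0=0$, and for $1\le t\le s$ put $y_t=\lfloor (i_t-1)/d\rfloor$, $z_t=\lfloor (i_t+dr-n-1)/d\rfloor$ and $q_t=z_t-y_t-r+q$ (which lies in $\{0,1\}$). For $0\le x\le\lfloor r/2\rfloor$: if $y_s\le x$ (in particular if $s=0$), then $\mathrm{leap}_1(a,x)=q-x$; otherwise let $h\in\{1,\dots,s\}$ be the index with $y_{h-1}\le x<y_h$ and set $\mathrm{leap}_1(a,x)=\max\big(\{y_h-x+q_h\}\cup\{y_j-y_{j-1}+q_j: h<j\le s\}\cup\{q-y_s\}\big)$. *)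

theory Defs
  imports Main
begin

text \<open>Vertices of Q_n(d,r): pairs (a, x), where a \<subseteq> {1..n} is the support of a
  binary vector of length n (so the Hamming weight is card a) and x \<in> {0..<r}
  represents an element of Z_r.\<close>

definition is_vertex :: "nat \<Rightarrow> nat \<Rightarrow> nat set \<times> nat \<Rightarrow> bool" where
  "is_vertex n r v \<longleftrightarrow> fst v \<subseteq> {1..n} \<and> snd v < r"

definition idx_mod :: "nat \<Rightarrow> nat \<Rightarrow> nat" where
  "idx_mod n j = ((j - 1) mod n) + 1"

definition flip :: "nat set \<Rightarrow> nat \<Rightarrow> nat set" where
  "flip a j = (if j \<in> a then a - {j} else insert j a)"

definition rcr_adj :: "nat \<Rightarrow> nat \<Rightarrow> nat \<Rightarrow> nat set \<times> nat \<Rightarrow> nat set \<times> nat \<Rightarrow> bool" where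
  "rcr_adj n d r v w \<longleftrightarrow> is_vertex n r v \<and> is_vertex n r w \<and> v \<noteq> w \<and>
     ((snd w = snd v \<and> (\<exists>i\<in>{1..d}. fst w = flip (fst v) (idx_mod n (i + d * snd v))))
    \<or> (\<exists>i\<in>{1..d}. fst v = flip (fst w) (idx_mod n (i + d * snd w))) \<and> snd w = snd v
    \<or> (fst w = fst v \<and> (snd w = (snd v + 1) mod r \<or> snd v = (snd w + 1) mod r)))"

definition rcr_dist :: "nat \<Rightarrow> nat \<Rightarrow> nat \<Rightarrow> nat set \<times> nat \<Rightarrow> nat set \<times> nat \<Rightarrow> nat" where
  "rcr_dist n d r v w = (LEAST k. (rcr_adj n d r ^^ k) v w)"

definition leap1 :: "nat \<Rightarrow> nat \<Rightarrow> nat \<Rightarrow> nat set \<Rightarrow> nat \<Rightarrow> int" where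
  "leap1 n d r a x =
    (let q = int ((n + d - 1) div d);
         L = sorted_list_of_set a;
         s = length L;
         y = (\<lambda>t. if t = 0 then 0 else int ((L ! (t - 1) - 1) div d));
         z = (\<lambda>t. int ((L ! (t - 1) + d * r - n - 1) div d));
         qq = (\<lambda>t. z t - y t - int r + q)
     in if s = 0 \<or> y s \<le> int x then q - int x
        else (let h = (LEAST h. 1 \<le> h \<and> h \<le> s \<and> y (h - 1) \<le> int x \<and> int x < y h)
              in Max ({y h - int x + qq h} \<union> {y j - y (j - 1) + qq j | j. h < j \<and> j \<le> s}
                      \<union> {q - y s})))"

end

theory Submission
  imports Defs
begin


locale rcr =
  fixes n d r :: nat
  assumes n2: "n \<ge> 2" and d1: "d \<ge> 1" and r3: "r \<ge> 3" and nd: "n \<ge> d"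
    and dvdr: "(d * r) mod n = 0" and big: "d * r \<ge> 2 * n"
begin

definition covers :: "nat \<Rightarrow> nat \<Rightarrow> bool" where
  "covers P i \<longleftrightarrow> (\<exists>k\<in>{1..d}. idx_mod n (k + d * P) = i)"

definition Y :: "nat \<Rightarrow> int" where "Y i = int ((i - 1) div d)"
definition Z :: "nat \<Rightarrow> int" where "Z i = int ((i + d * r - n - 1) div d)"

lemma cov1: assumes "i \<in> {1..n}" shows "covers (nat (Y i)) i" "Y i < int r" "0 \<le> Y i"
proof -
  have "(i - 1) mod d + 1 + d * ((i - 1) div d) = i" using assms d1
    by simp
  moreover have "(i - 1) mod d + 1 \<in> {1..d}" using d1
    by (simp add: Suc_leI)
  moreover have "idx_mod n i = i" using assms unfolding idx_mod_def by auto
  ultimately show "covers (nat (Y i)) i" unfolding covers_def Y_def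
    by force
  have "(i - 1) div d \<le> (n - 1) div d" using assms by (intro div_le_mono) auto
  moreover have "d * ((n - 1) div d) \<le> n - 1" by simp
  hence "d * ((n - 1) div d) < d * r" using big n2 by linarith
  hence "(n - 1) div d < r" by simp
  ultimately show "Y i < int r" unfolding Y_def by simp
  show "0 \<le> Y i" unfolding Y_def by simp
qed

lemma dr_mult: obtains K where "d * r = n * K" "K \<ge> 2"
proof -
  obtain K where K: "d * r = n * K" using dvdr by auto
  have "K \<ge> 2" using K big n2
    by simp
  thus ?thesis using K that by blast
qed

lemma cov2: assumes "i \<in> {1..n}" shows "covers (nat (Z i)) i" "Z i < int r" "0 \<le> Z i"
proof -
  obtain K where K: "d * r = n * K" "K \<ge> 2" by (rule dr_mult)
  define g where "g = i + d * r - n - 1"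
  have g: "g = (i - 1) + n * (K - 1)" using K assms unfolding g_def
    by (auto simp: algebra_simps diff_mult_distrib2)
  have c1: "(g mod d) + 1 + d * (g div d) = g + 1" by simp
  have c2: "g mod d + 1 \<in> {1..d}" using d1 by (simp add: Suc_leI)
  have "g mod n = (i - 1) mod n" unfolding g by (rule mod_mult_self2)
  moreover have "i - 1 < n" using assms by auto
  ultimately have "g mod n = i - 1" by simp
  hence c3: "idx_mod n (g + 1) = i" using assms unfolding idx_mod_def by auto
  show "covers (nat (Z i)) i" unfolding covers_def Z_def g_def[symmetric] using c1 c2 c3
    by force
  have "g < d * r" using assms big unfolding g_def by auto
  hence "g div d < r" by (simp add: less_mult_imp_div_less mult.commute)
  thus "Z i < int r" unfolding Z_def g_def by simp
  show "0 \<le> Z i" unfolding Z_def by simp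
qed

lemma cov3: assumes "covers P i" "P < r" "i \<in> {1..n}"
  shows "Y i \<le> int P" "int P \<le> Z i"
proof -
  obtain K where K: "d * r = n * K" "K \<ge> 2" by (rule dr_mult)
  obtain k where k: "k \<in> {1..d}" "idx_mod n (k + d * P) = i" using assms unfolding covers_def by auto
  define g where "g = k + d * P - 1"
  have gi: "g mod n = i - 1" using k assms unfolding idx_mod_def g_def by auto
  have "P + 1 \<le> r" using assms by simp
  hence "d * (P + 1) \<le> d * r" by (rule mult_le_mono2)
  hence "d * P + d \<le> d * r" by (simp add: algebra_simps)
  hence gle: "g \<le> d * r - 1" using k unfolding g_def by auto
  have "g = n * (g div n) + (i - 1)" by (metis div_mult_mod_eq gi mult.commute)
  have "i - 1 \<le> g" using gi by (metis mod_less_eq_dividend)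
  hence "i - 1 < d * (P + 1)" using k unfolding g_def by auto
  hence "(i - 1) div d < P + 1" by (simp add: less_mult_imp_div_less mult.commute)
  thus "Y i \<le> int P" unfolding Y_def by simp
  have "n * (g div n) < n * K" using \<open>g = n * (g div n) + (i - 1)\<close> gle K(1) assms
    using big d1 nd by linarith
  hence "g div n < K" by simp
  hence "g div n \<le> K - 1" by arith
  hence "n * (g div n) \<le> n * (K - 1)" by simp
  moreover have nk: "n * (K - 1) = d * r - n" using K(1) by (simp add: diff_mult_distrib2)
  ultimately have hm: "n * (g div n) \<le> d * r - n" by linarith
  have i1: "1 \<le> i" using assms(3) by simp
  have "g \<le> i + d * r - n - 1" using hm i1 big \<open>g = n * (g div n) + (i - 1)\<close> by linarith
  moreover have "d * P \<le> g" using k unfolding g_def by auto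
  ultimately have "d * P \<le> i + d * r - n - 1" by simp
  hence "P \<le> (i + d * r - n - 1) div d" using d1
    by (simp add: less_eq_div_iff_mult_less_eq mult.commute)
  thus "int P \<le> Z i" unfolding Z_def by simp
qed

end

context rcr begin

definition valid :: "nat set \<Rightarrow> nat \<Rightarrow> int \<Rightarrow> int \<Rightarrow> int \<Rightarrow> bool" where
 "valid A x lo hi p \<longleftrightarrow> lo \<le> 0 \<and> 0 \<le> hi \<and> lo \<le> p \<and> p \<le> hi \<and> p mod int r = int x \<and>
    (\<forall>i\<in>A. \<exists>p'. lo \<le> p' \<and> p' \<le> hi \<and> covers (nat (p' mod int r)) i)"

definition CC :: "nat set \<Rightarrow> nat \<Rightarrow> nat" where
 "CC A x = (LEAST c. \<exists>lo hi p. valid A x lo hi p \<and> int c = 2*(hi-lo) - \<bar>p\<bar>)"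

lemma valid_cost_nonneg: "valid A x lo hi p \<Longrightarrow> 0 \<le> 2*(hi-lo) - \<bar>p\<bar>"
  by (auto simp: valid_def abs_if)

lemma valid_ex: assumes "A \<subseteq> {1..n}" "x < r" shows "valid A x 0 (int r - 1) (int x)"
  unfolding valid_def
proof (intro conjI ballI)
  fix i assume "i \<in> A"
  hence i: "i \<in> {1..n}" using assms by auto
  show "\<exists>p'. 0 \<le> p' \<and> p' \<le> int r - 1 \<and> covers (nat (p' mod int r)) i"
    using cov1[OF i] by (intro exI[of _ "Y i"]) auto
qed (use assms in auto)

lemma CC_le:
  assumes "valid A x lo hi p" shows "int (CC A x) \<le> 2*(hi-lo) - \<bar>p\<bar>"
proof -
  have nn: "0 \<le> 2*(hi-lo) - \<bar>p\<bar>" using assms by (rule valid_cost_nonneg)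
  have "\<exists>lo' hi' p'. valid A x lo' hi' p' \<and> int (nat (2*(hi-lo) - \<bar>p\<bar>)) = 2*(hi'-lo') - \<bar>p'\<bar>"
    using assms nn by auto
  hence "CC A x \<le> nat (2*(hi-lo) - \<bar>p\<bar>)" unfolding CC_def by (rule Least_le)
  thus ?thesis using nn by linarith
qed

lemma CC_attain: assumes "A \<subseteq> {1..n}" "x < r"
  shows "\<exists>lo hi p. valid A x lo hi p \<and> int (CC A x) = 2*(hi-lo) - \<bar>p\<bar>"
proof -
  have v: "valid A x 0 (int r - 1) (int x)" by (rule valid_ex[OF assms])
  have "\<exists>c lo hi p. valid A x lo hi p \<and> int c = 2*(hi-lo) - \<bar>p\<bar>"
  proof (intro exI conjI)
    show "valid A x 0 (int r - 1) (int x)" by (rule v)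
    show "int (nat (2*(int r - 1 - 0) - \<bar>int x\<bar>)) = 2*(int r - 1 - 0) - \<bar>int x\<bar>"
      using valid_cost_nonneg[OF v] by simp
  qed
  thus ?thesis unfolding CC_def by (rule LeastI_ex)
qed

lemma CC_eqI: assumes "A \<subseteq> {1..n}" "x < r"
  and lb: "\<And>lo hi p. valid A x lo hi p \<Longrightarrow> T \<le> 2*(hi-lo) - \<bar>p\<bar>"
  and ub: "valid A x lo0 hi0 p0" "2*(hi0-lo0) - \<bar>p0\<bar> = T"
  shows "int (CC A x) = T"
  using CC_attain[OF assms(1,2)] lb CC_le[OF ub(1)] ub(2) by force

lemma valid_mono: "valid A x lo hi p \<Longrightarrow> B \<subseteq> A \<Longrightarrow> valid B x lo hi p"
  by (auto simp: valid_def)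

lemma CC_mono: assumes "B \<subseteq> A" "A \<subseteq> {1..n}" "x < r" shows "CC B x \<le> CC A x"
proof -
  obtain lo hi p where "valid A x lo hi p" "int (CC A x) = 2*(hi-lo) - \<bar>p\<bar>"
    using CC_attain[OF assms(2,3)] by blast
  thus ?thesis using CC_le[OF valid_mono[OF _ assms(1)]] by force
qed

lemma valid_ins: assumes "valid A x lo hi p" "covers x j" shows "valid (insert j A) x lo hi p"
  using assms unfolding valid_def by (auto intro!: exI[of _ p])

lemma CC_ins: assumes "covers x j" "A \<subseteq> {1..n}" "x < r" shows "CC (insert j A) x \<le> CC A x"
proof -
  obtain lo hi p where "valid A x lo hi p" "int (CC A x) = 2*(hi-lo) - \<bar>p\<bar>"
    using CC_attain[OF assms(2,3)] by blast
  thus ?thesis using CC_le[OF valid_ins[OF _ assms(1)]] by force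
qed

lemma mod_succ: "p mod int r = int x \<Longrightarrow> (p + 1) mod int r = int ((x + 1) mod r)"
  by (metis Suc_eq_plus1 int_ops(4) mod_add_left_eq of_nat_mod)

lemma mod_pred: assumes "p mod int r = int ((x' + 1) mod r)" "x' < r" shows "(p - 1) mod int r = int x'"
proof -
  have "(p - 1) mod int r = (p mod int r - 1) mod int r" by (simp add: mod_diff_left_eq)
  also have "\<dots> = ((int x' + 1) mod int r - 1) mod int r" using assms(1) by (simp add: of_nat_mod add.commute)
  also have "\<dots> = (int x' + 1 - 1) mod int r" by (simp add: mod_diff_left_eq)
  also have "\<dots> = int x'" using assms(2) by simp
  finally show ?thesis .
qed

lemma valid_succ: assumes "valid A x lo hi p"
  shows "valid A ((x + 1) mod r) lo (max hi (p+1)) (p+1)"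
    "2*(max hi (p+1) - lo) - \<bar>p+1\<bar> \<le> 2*(hi-lo) - \<bar>p\<bar> + 1"
proof -
  have h: "lo \<le> 0" "0 \<le> hi" "lo \<le> p" "p \<le> hi" using assms unfolding valid_def by auto
  show "valid A ((x + 1) mod r) lo (max hi (p+1)) (p+1)"
    using assms mod_succ[of p x] unfolding valid_def
    by (auto simp: abs_if) (meson le_max_iff_disj order_trans)
  show "2*(max hi (p+1) - lo) - \<bar>p+1\<bar> \<le> 2*(hi-lo) - \<bar>p\<bar> + 1"
    using h by (auto simp: max_def abs_if)
qed

lemma valid_pred: assumes "valid A x lo hi p" "x = (x' + 1) mod r" "x' < r"
  shows "valid A x' (min lo (p-1)) hi (p-1)"
    "2*(hi - min lo (p-1)) - \<bar>p-1\<bar> \<le> 2*(hi-lo) - \<bar>p\<bar> + 1"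
proof -
  have h: "lo \<le> 0" "0 \<le> hi" "lo \<le> p" "p \<le> hi" using assms unfolding valid_def by auto
  show "valid A x' (min lo (p-1)) hi (p-1)"
    using assms mod_pred[of p x'] unfolding valid_def
    by (auto simp: abs_if) (meson min.coboundedI1 order_trans)
  show "2*(hi - min lo (p-1)) - \<bar>p-1\<bar> \<le> 2*(hi-lo) - \<bar>p\<bar> + 1"
    using h by (auto simp: min_def abs_if)
qed

definition ff :: "nat set \<times> nat \<Rightarrow> nat" where "ff v = card (fst v) + CC (fst v) (snd v)"

lemma flip_flip: "flip (flip a j) j = a"
  unfolding flip_def by auto

lemma covers_idx: "i \<in> {1..d} \<Longrightarrow> covers x (idx_mod n (i + d * x))"
  unfolding covers_def by auto

lemma ff_flip: assumes "A \<subseteq> {1..n}" "flip A j \<subseteq> {1..n}" "covers x j" "x < r"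
  shows "ff (flip A j, x) \<le> ff (A, x) + 1"
proof (cases "j \<in> A")
  case True
  have fin: "finite A" using assms(1) finite_subset by blast
  have "flip A j = A - {j}" using True unfolding flip_def by auto
  moreover have "CC (A - {j}) x \<le> CC A x" using CC_mono[OF _ assms(1,4)] by blast
  ultimately show ?thesis unfolding ff_def using card_Diff1_le[of A j] by simp
next
  case False
  have fin: "finite A" using assms(1) finite_subset by blast
  have "flip A j = insert j A" using False unfolding flip_def by auto
  moreover have "CC (insert j A) x \<le> CC A x" using CC_ins[OF assms(3,1,4)] .
  ultimately show ?thesis unfolding ff_def using False fin by simp
qed

lemma ff_edge: assumes "rcr_adj n d r v w" shows "ff w \<le> ff v + 1"
proof -
  obtain A x where v: "v = (A, x)" by (cases v)
  obtain B y where w: "w = (B, y)" by (cases w)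
  have A: "A \<subseteq> {1..n}" "x < r" and B: "B \<subseteq> {1..n}" "y < r"
    using assms unfolding rcr_adj_def is_vertex_def v w by auto
  consider (f1) i where "i \<in> {1..d}" "y = x" "B = flip A (idx_mod n (i + d * x))"
    | (f2) i where "i \<in> {1..d}" "y = x" "A = flip B (idx_mod n (i + d * y))"
    | (s1) "B = A" "y = (x + 1) mod r"
    | (s2) "B = A" "x = (y + 1) mod r"
  proof -
    have "(y = x \<and> (\<exists>i\<in>{1..d}. B = flip A (idx_mod n (i + d * x))))
      \<or> (\<exists>i\<in>{1..d}. A = flip B (idx_mod n (i + d * y))) \<and> y = x
      \<or> (B = A \<and> (y = (x + 1) mod r \<or> x = (y + 1) mod r))"
      using assms unfolding rcr_adj_def v w by simp
    thus ?thesis using that by blast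
  qed
  thus ?thesis
  proof cases
    case f1
    thus ?thesis using ff_flip[OF A(1) _ covers_idx[OF f1(1)] A(2)] B(1) v w by simp
  next
    case f2
    hence "B = flip A (idx_mod n (i + d * x))" using flip_flip by metis
    thus ?thesis using ff_flip[OF A(1) _ covers_idx[OF f2(1)] A(2)] B(1) v w f2 by simp
  next
    case s1
    obtain lo hi p where vp: "valid A x lo hi p" "int (CC A x) = 2*(hi-lo) - \<bar>p\<bar>"
      using CC_attain[OF A] by blast
    have "int (CC A ((x + 1) mod r)) \<le> int (CC A x) + 1"
      using CC_le[OF valid_succ(1)[OF vp(1)]] valid_succ(2)[OF vp(1)] vp(2) by linarith
    hence "int (CC A y) \<le> int (CC A x) + 1" using s1 by simp
    thus ?thesis unfolding ff_def v w s1 by simp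
  next
    case s2
    obtain lo hi p where vp: "valid A x lo hi p" "int (CC A x) = 2*(hi-lo) - \<bar>p\<bar>"
      using CC_attain[OF A] by blast
    have "int (CC A y) \<le> int (CC A x) + 1"
      using CC_le[OF valid_pred(1)[OF vp(1) s2(2) B(2)]] valid_pred(2)[OF vp(1) s2(2) B(2)] vp(2) by linarith
    thus ?thesis unfolding ff_def v w s2 by simp
  qed
qed

end

context rcr begin

lemma mod_ne: "(p + 1) mod int r \<noteq> p mod int r"
proof
  assume "(p + 1) mod int r = p mod int r"
  hence "int r dvd (p + 1) - p" by (simp add: mod_eq_dvd_iff)
  hence "int r dvd 1" by simp
  thus False using r3 by simp
qed

lemma ring_nb:
  assumes A: "A \<subseteq> {1..n}" "x < r" and px: "p mod int r = int x"
    and p2: "p2 = p + 1 \<or> p2 = p - 1"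
    and h: "lo' \<le> 0" "0 \<le> hi'" "lo' \<le> p2" "p2 \<le> hi'"
    and cv: "\<forall>i\<in>A. \<exists>p'. lo' \<le> p' \<and> p' \<le> hi' \<and> covers (nat (p' mod int r)) i"
    and lt: "2*(hi'-lo') - \<bar>p2\<bar> < int (CC A x)"
  shows "\<exists>w. rcr_adj n d r w (A, x) \<and> ff w < ff (A, x)"
proof -
  define x2 where "x2 = nat (p2 mod int r)"
  have rpos: "0 < int r" using r3 by simp
  have x2i: "int x2 = p2 mod int r" unfolding x2_def using rpos by simp
  have x2r: "x2 < r" using x2i rpos
    by (metis of_nat_less_iff pos_mod_bound)
  have v: "valid A x2 lo' hi' p2" unfolding valid_def using h cv x2i by auto
  have "CC A x2 < CC A x" using CC_le[OF v] lt by linarith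
  hence lt2: "ff (A, x2) < ff (A, x)" unfolding ff_def by simp
  have ne: "x2 \<noteq> x"
  proof
    assume "x2 = x"
    hence "p2 mod int r = p mod int r" using x2i px by simp
    thus False using p2 mod_ne[of p] mod_ne[of "p - 1"] by auto
  qed
  have adj: "x2 = (x + 1) mod r \<or> x = (x2 + 1) mod r"
    using p2
  proof
    assume "p2 = p + 1"
    hence "int x2 = int ((x + 1) mod r)" using x2i mod_succ[OF px] by simp
    thus ?thesis by simp
  next
    assume "p2 = p - 1"
    hence "(p - 1) mod int r = int x2" using x2i by simp
    hence "(p - 1 + 1) mod int r = int ((x2 + 1) mod r)" by (rule mod_succ)
    hence "int x = int ((x2 + 1) mod r)" using px by simp
    thus ?thesis by simp
  qed
  have "rcr_adj n d r (A, x2) (A, x)"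
    unfolding rcr_adj_def is_vertex_def using A x2r ne adj by auto
  thus ?thesis using lt2 by blast
qed

lemma ff_dec: assumes "is_vertex n r v" "v \<noteq> ({}, 0)"
  shows "\<exists>w. rcr_adj n d r w v \<and> ff w < ff v"
proof -
  obtain A x where v: "v = (A, x)" by (cases v)
  have A: "A \<subseteq> {1..n}" "x < r" using assms(1) unfolding is_vertex_def v by auto
  have fin: "finite A" using A(1) finite_subset by blast
  show ?thesis
  proof (cases "\<exists>j\<in>A. covers x j")
    case True
    then obtain j k where j: "j \<in> A" "k \<in> {1..d}" "idx_mod n (k + d * x) = j"
      unfolding covers_def by blast
    have fl: "flip (A - {j}) j = A" using j(1) unfolding flip_def by auto
    have adj: "rcr_adj n d r (A - {j}, x) (A, x)"
      unfolding rcr_adj_def is_vertex_def using A j fl by auto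
    have "CC (A - {j}) x \<le> CC A x" using CC_mono[OF _ A] by blast
    moreover have "card (A - {j}) < card A" by (rule card_Diff1_less[OF fin j(1)])
    ultimately have "ff (A - {j}, x) < ff (A, x)" unfolding ff_def by simp
    thus ?thesis using adj v by blast
  next
    case False
    obtain lo hi p where vp: "valid A x lo hi p" and c: "int (CC A x) = 2*(hi-lo) - \<bar>p\<bar>"
      using CC_attain[OF A] by blast
    have h: "lo \<le> 0" "0 \<le> hi" "lo \<le> p" "p \<le> hi" and px: "p mod int r = int x"
      and cv: "\<forall>i\<in>A. \<exists>p'. lo \<le> p' \<and> p' \<le> hi \<and> covers (nat (p' mod int r)) i"
      using vp unfolding valid_def by auto
    have notp: "\<forall>i\<in>A. \<exists>p'. lo \<le> p' \<and> p' \<le> hi \<and> p' \<noteq> p \<and> covers (nat (p' mod int r)) i"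
    proof
      fix i assume i: "i \<in> A"
      then obtain p' where p': "lo \<le> p'" "p' \<le> hi" "covers (nat (p' mod int r)) i" using cv by blast
      have "p' \<noteq> p"
      proof
        assume "p' = p"
        hence "covers x i" using p'(3) px by simp
        thus False using False i by blast
      qed
      thus "\<exists>p'. lo \<le> p' \<and> p' \<le> hi \<and> p' \<noteq> p \<and> covers (nat (p' mod int r)) i" using p' by blast
    qed
    have "\<exists>w. rcr_adj n d r w (A, x) \<and> ff w < ff (A, x)"
    proof (cases "0 < p")
      case pos: True
      show ?thesis
      proof (cases "hi = p")
        case True
        have cv': "\<forall>i\<in>A. \<exists>p'. lo \<le> p' \<and> p' \<le> p - 1 \<and> covers (nat (p' mod int r)) i"
          using notp True by force
        show ?thesis
          by (rule ring_nb[OF A px _ _ _ _ _ cv', of "p - 1"]) (use h pos c True in auto)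
      next
        case False
        show ?thesis
          by (rule ring_nb[OF A px _ _ _ _ _ cv, of "p + 1"]) (use h pos c False in auto)
      qed
    next
      case npos: False
      show ?thesis
      proof (cases "p < 0")
        case neg: True
        show ?thesis
        proof (cases "lo = p")
          case True
          have cv': "\<forall>i\<in>A. \<exists>p'. p + 1 \<le> p' \<and> p' \<le> hi \<and> covers (nat (p' mod int r)) i"
          proof
            fix i assume "i \<in> A"
            then obtain p' where "lo \<le> p'" "p' \<le> hi" "p' \<noteq> p" "covers (nat (p' mod int r)) i"
              using notp by blast
            thus "\<exists>p'. p + 1 \<le> p' \<and> p' \<le> hi \<and> covers (nat (p' mod int r)) i"
              using True by (intro exI[of _ p']) auto
          qed
          show ?thesis
            by (rule ring_nb[OF A px _ _ _ _ _ cv', of "p + 1"]) (use h neg c True in auto)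
        next
          case False
          show ?thesis
            by (rule ring_nb[OF A px _ _ _ _ _ cv, of "p - 1"]) (use h neg c False in auto)
        qed
      next
        case False
        hence p0: "p = 0" using npos by simp
        show ?thesis
        proof (cases "0 < hi")
          case True
          show ?thesis
            by (rule ring_nb[OF A px _ _ _ _ _ cv, of "p + 1"]) (use h p0 c True in auto)
        next
          case hi0: False
          show ?thesis
          proof (cases "lo < 0")
            case True
            show ?thesis
              by (rule ring_nb[OF A px _ _ _ _ _ cv, of "p - 1"]) (use h p0 c True in auto)
          next
            case False
            have "A = {}" using notp h hi0 False p0 by force
            moreover have "x = 0" using px p0 by simp
            ultimately show ?thesis using assms(2) v by simp
          qed
        qed
      qed
    qed
    thus ?thesis using v by simp
  qed
qed

lemma ff_start: "ff ({}, 0) = 0"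
proof -
  have "valid {} 0 0 0 0" unfolding valid_def by simp
  from CC_le[OF this] show ?thesis unfolding ff_def by simp
qed

lemma walk_ge: "(rcr_adj n d r ^^ k) ({}, 0) v \<Longrightarrow> ff v \<le> k"
proof (induction k arbitrary: v)
  case 0
  thus ?case using ff_start by simp
next
  case (Suc k)
  then obtain u where "(rcr_adj n d r ^^ k) ({}, 0) u" "rcr_adj n d r u v"
    by (metis relpowp_Suc_E)
  thus ?case using Suc.IH ff_edge by fastforce
qed

lemma walk_ex: "is_vertex n r v \<Longrightarrow> (rcr_adj n d r ^^ ff v) ({}, 0) v"
proof (induction "ff v" arbitrary: v rule: less_induct)
  case less
  show ?case
  proof (cases "v = ({}, 0)")
    case True
    thus ?thesis using ff_start by simp
  next
    case False
    then obtain w where w: "rcr_adj n d r w v" "ff w < ff v" using ff_dec less.prems by blast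
    have "ff v \<le> ff w + 1" using ff_edge[OF w(1)] .
    hence e: "ff v = Suc (ff w)" using w(2) by simp
    have "is_vertex n r w" using w(1) unfolding rcr_adj_def by simp
    hence "(rcr_adj n d r ^^ ff w) ({}, 0) w" using less.hyps w(2) by blast
    thus ?thesis unfolding e using w(1) by (rule relpowp_Suc_I)
  qed
qed

lemma dist_ff: "is_vertex n r v \<Longrightarrow> rcr_dist n d r ({}, 0) v = ff v"
  unfolding rcr_dist_def using walk_ex walk_ge by (intro Least_equality) auto

end

context rcr begin

lemma leap_props:
  assumes a: "a \<subseteq> {1..n}"
  shows "\<And>lo hi. lo \<le> 0 \<Longrightarrow> int x \<le> hi \<Longrightarrow> (\<forall>i\<in>a. Y i \<le> hi \<or> int r + lo \<le> Z i)
            \<Longrightarrow> int ((n + d - 1) div d) - (hi - lo) \<le> leap1 n d r a x"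
    and "\<exists>lo hi. lo \<le> 0 \<and> int x \<le> hi \<and> hi - lo = int ((n + d - 1) div d) - leap1 n d r a x
            \<and> (\<forall>i\<in>a. Y i \<le> hi \<or> int r + lo \<le> Z i)"
proof -
  define q where "q = int ((n + d - 1) div d)"
  define L where "L = sorted_list_of_set a"
  define s where "s = length L"
  define y where "y = (\<lambda>t. if t = 0 then 0 else int ((L ! (t - 1) - 1) div d))"
  define z where "z = (\<lambda>t. int ((L ! (t - 1) + d * r - n - 1) div d))"
  define qq where "qq = (\<lambda>t. z t - y t - int r + q)"
  define h where "h = (LEAST h. 1 \<le> h \<and> h \<le> s \<and> y (h - 1) \<le> int x \<and> int x < y h)"
  define S where "S = {y h - int x + qq h} \<union> {y j - y (j - 1) + qq j | j. h < j \<and> j \<le> s} \<union> {q - y s}"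
  have leq: "leap1 n d r a x = (if s = 0 \<or> y s \<le> int x then q - int x else Max S)"
    unfolding leap1_def Let_def q_def L_def s_def y_def z_def qq_def h_def S_def by (rule refl)
  have fin: "finite a" using a finite_subset by blast
  have setL: "set L = a" and sortL: "sorted L" unfolding L_def using fin by auto
  have elem: "\<And>t. 1 \<le> t \<Longrightarrow> t \<le> s \<Longrightarrow> L ! (t - 1) \<in> a"
  proof -
    fix t :: nat assume "1 \<le> t" "t \<le> s"
    hence "t - 1 < length L" unfolding s_def by simp
    thus "L ! (t - 1) \<in> a" using setL nth_mem by blast
  qed
  have surj: "\<And>i. i \<in> a \<Longrightarrow> \<exists>t. 1 \<le> t \<and> t \<le> s \<and> L ! (t - 1) = i"
  proof -
    fix i assume "i \<in> a"
    hence "i \<in> set L" using setL by simp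
    then obtain k where "k < length L" "L ! k = i" by (auto simp: in_set_conv_nth)
    thus "\<exists>t. 1 \<le> t \<and> t \<le> s \<and> L ! (t - 1) = i" unfolding s_def by (intro exI[of _ "k + 1"]) auto
  qed
  have yY: "\<And>t. 1 \<le> t \<Longrightarrow> y t = Y (L ! (t - 1))" unfolding y_def Y_def by auto
  have zZ: "\<And>t. z t = Z (L ! (t - 1))" unfolding z_def Z_def by auto
  have Lmono: "\<And>t t'. 1 \<le> t \<Longrightarrow> t \<le> t' \<Longrightarrow> t' \<le> s \<Longrightarrow> L ! (t - 1) \<le> L ! (t' - 1)"
    using sortL unfolding s_def by (intro sorted_nth_mono) auto
  have ymono: "\<And>t t'. t \<le> t' \<Longrightarrow> t' \<le> s \<Longrightarrow> y t \<le> y t'"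
  proof -
    fix t t' :: nat assume tt: "t \<le> t'" "t' \<le> s"
    show "y t \<le> y t'"
    proof (cases "t = 0")
      case True thus ?thesis unfolding y_def by simp
    next
      case False
      hence "L ! (t - 1) \<le> L ! (t' - 1)" using Lmono tt by simp
      hence "(L ! (t - 1) - 1) div d \<le> (L ! (t' - 1) - 1) div d" by (intro div_le_mono) simp
      thus ?thesis unfolding y_def using False tt by simp
    qed
  qed
  have zmono: "\<And>t t'. 1 \<le> t \<Longrightarrow> t \<le> t' \<Longrightarrow> t' \<le> s \<Longrightarrow> z t \<le> z t'"
  proof -
    fix t t' :: nat assume tt: "1 \<le> t" "t \<le> t'" "t' \<le> s"
    hence "L ! (t - 1) \<le> L ! (t' - 1)" using Lmono by simp
    hence "(L ! (t - 1) + d * r - n - 1) div d \<le> (L ! (t' - 1) + d * r - n - 1) div d"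
      by (intro div_le_mono) simp
    thus "z t \<le> z t'" unfolding z_def by simp
  qed
  have zr: "\<And>t. 1 \<le> t \<Longrightarrow> t \<le> s \<Longrightarrow> z t < int r"
  proof -
    fix t :: nat assume "1 \<le> t" "t \<le> s"
    hence "L ! (t - 1) \<in> {1..n}" using elem a by blast
    thus "z t < int r" using cov2(2) zZ by simp
  qed
  have y0: "y 0 = 0" unfolding y_def by simp
  have hprop: "1 \<le> h \<and> h \<le> s \<and> y (h - 1) \<le> int x \<and> int x < y h" if ns: "\<not> (s = 0 \<or> y s \<le> int x)"
  proof -
    define j0 where "j0 = (LEAST t. 1 \<le> t \<and> t \<le> s \<and> int x < y t)"
    have ex: "1 \<le> s \<and> s \<le> s \<and> int x < y s" using ns by auto
    have j0: "1 \<le> j0 \<and> j0 \<le> s \<and> int x < y j0" unfolding j0_def using ex by (rule LeastI)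
    have "y (j0 - 1) \<le> int x"
    proof (cases "j0 = 1")
      case True thus ?thesis using y0 by simp
    next
      case False
      have "\<not> (1 \<le> j0 - 1 \<and> j0 - 1 \<le> s \<and> int x < y (j0 - 1))"
        unfolding j0_def by (rule not_less_Least) (use j0 False in \<open>auto simp: j0_def\<close>)
      thus ?thesis using j0 False by auto
    qed
    hence "\<exists>h. 1 \<le> h \<and> h \<le> s \<and> y (h - 1) \<le> int x \<and> int x < y h" using j0 by blast
    thus ?thesis unfolding h_def by (rule LeastI_ex)
  qed
  have "finite {j. h < j \<and> j \<le> s}" by (rule finite_subset[of _ "{..s}"]) auto
  hence "finite {y j - y (j - 1) + qq j | j. h < j \<and> j \<le> s}" by (rule finite_image_set)
  hence finS: "finite S" unfolding S_def by simp
  show "int ((n + d - 1) div d) - (hi - lo) \<le> leap1 n d r a x"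
    if lo: "lo \<le> 0" and hx: "int x \<le> hi" and cond: "\<forall>i\<in>a. Y i \<le> hi \<or> int r + lo \<le> Z i" for lo hi
  proof (cases "s = 0 \<or> y s \<le> int x")
    case True
    thus ?thesis unfolding leq q_def[symmetric] using lo hx by simp
  next
    case ns: False
    note hp = hprop[OF ns]
    have lS: "leap1 n d r a x = Max S" unfolding leq using ns by simp
    have mem: "m \<in> S \<Longrightarrow> m \<le> leap1 n d r a x" for m unfolding lS using finS by (rule Max_ge)
    show ?thesis
    proof (cases "y s \<le> hi")
      case True
      have "q - y s \<in> S" unfolding S_def by simp
      thus ?thesis using mem True lo unfolding q_def by fastforce
    next
      case False
      define j where "j = (LEAST t. 1 \<le> t \<and> t \<le> s \<and> hi < y t)"
      have ex: "1 \<le> s \<and> s \<le> s \<and> hi < y s" using ns False by auto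
      have j: "1 \<le> j \<and> j \<le> s \<and> hi < y j" unfolding j_def using ex by (rule LeastI)
      have yj1: "y (j - 1) \<le> hi"
      proof (cases "j = 1")
        case True thus ?thesis using y0 hx by simp
      next
        case False
        have "\<not> (1 \<le> j - 1 \<and> j - 1 \<le> s \<and> hi < y (j - 1))"
          unfolding j_def by (rule not_less_Least) (use j False in \<open>auto simp: j_def\<close>)
        thus ?thesis using j False by auto
      qed
      have "Y (L ! (j - 1)) \<le> hi \<or> int r + lo \<le> Z (L ! (j - 1))" using cond elem j by blast
      hence zj: "int r + lo \<le> z j" using yY[of j] zZ[of j] j by auto
      have hj: "h \<le> j"
      proof (rule ccontr)
        assume "\<not> h \<le> j"
        hence "y j \<le> y (h - 1)" using ymono hp by auto
        thus False using hp j hx by auto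
      qed
      show ?thesis
      proof (cases "h = j")
        case True
        have "y h - int x + qq h \<in> S" unfolding S_def by simp
        hence "y h - int x + qq h \<le> leap1 n d r a x" by (rule mem)
        thus ?thesis unfolding qq_def q_def[symmetric] using True zj hx by simp
      next
        case False
        have "y j - y (j - 1) + qq j \<in> S" unfolding S_def using hj False j by auto
        hence "y j - y (j - 1) + qq j \<le> leap1 n d r a x" by (rule mem)
        thus ?thesis unfolding qq_def q_def[symmetric] using zj yj1 by simp
      qed
    qed
  qed
  show "\<exists>lo hi. lo \<le> 0 \<and> int x \<le> hi \<and> hi - lo = int ((n + d - 1) div d) - leap1 n d r a x
            \<and> (\<forall>i\<in>a. Y i \<le> hi \<or> int r + lo \<le> Z i)"
  proof (cases "s = 0 \<or> y s \<le> int x")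
    case True
    have "\<forall>i\<in>a. Y i \<le> int x"
    proof
      fix i assume "i \<in> a"
      then obtain t where t: "1 \<le> t" "t \<le> s" "L ! (t - 1) = i" using surj by blast
      have "y t \<le> y s" using ymono t by simp
      thus "Y i \<le> int x" using True t yY[of t] by auto
    qed
    thus ?thesis unfolding leq q_def[symmetric] using True by (intro exI[of _ 0] exI[of _ "int x"]) auto
  next
    case ns: False
    note hp = hprop[OF ns]
    have lS: "leap1 n d r a x = Max S" unfolding leq using ns by simp
    have "Max S \<in> S" using finS by (intro Max_in) (auto simp: S_def)
    hence cs: "Max S = y h - int x + qq h \<or> (\<exists>j. h < j \<and> j \<le> s \<and> Max S = y j - y (j - 1) + qq j)
        \<or> Max S = q - y s" unfolding S_def by blast
    \<comment> \<open>generic strategy: bits before j covered on the right, from j on covered on the left\<close>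
    have strat: "\<forall>i\<in>a. Y i \<le> hi' \<or> int r + (z j' - int r) \<le> Z i"
      if "1 \<le> j'" "j' \<le> s" "y (j' - 1) \<le> hi'" for j' hi'
    proof
      fix i assume "i \<in> a"
      then obtain t where t: "1 \<le> t" "t \<le> s" "L ! (t - 1) = i" using surj by blast
      show "Y i \<le> hi' \<or> int r + (z j' - int r) \<le> Z i"
      proof (cases "t < j'")
        case True
        have "y t \<le> y (j' - 1)" using ymono True that by simp
        thus ?thesis using that t yY[of t] by auto
      next
        case False
        have "z j' \<le> z t" using zmono False that t by simp
        thus ?thesis using zZ[of t] t by auto
      qed
    qed
    from cs show ?thesis
    proof (elim disjE exE conjE)
      assume m: "Max S = y h - int x + qq h"
      show ?thesis
      proof (intro exI conjI)
        show "z h - int r \<le> 0" using zr[of h] hp by simp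
        show "int x \<le> int x" by simp
        show "int x - (z h - int r) = int ((n + d - 1) div d) - leap1 n d r a x"
          unfolding lS m qq_def q_def by simp
        show "\<forall>i\<in>a. Y i \<le> int x \<or> int r + (z h - int r) \<le> Z i" using strat hp by blast
      qed
    next
      fix j assume j: "h < j" "j \<le> s" and m: "Max S = y j - y (j - 1) + qq j"
      have "y h \<le> y (j - 1)" using ymono j by simp
      show ?thesis
      proof (intro exI conjI)
        have "1 \<le> j" using j by simp
        show "z j - int r \<le> 0" using zr[OF \<open>1 \<le> j\<close> j(2)] by simp
        show "int x \<le> y (j - 1)" using hp \<open>y h \<le> y (j - 1)\<close> by simp
        show "y (j - 1) - (z j - int r) = int ((n + d - 1) div d) - leap1 n d r a x"
          unfolding lS m qq_def q_def by simp
        show "\<forall>i\<in>a. Y i \<le> y (j - 1) \<or> int r + (z j - int r) \<le> Z i" using strat hp j by simp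
      qed
    next
      assume m: "Max S = q - y s"
      have "\<forall>i\<in>a. Y i \<le> y s"
      proof
        fix i assume "i \<in> a"
        then obtain t where t: "1 \<le> t" "t \<le> s" "L ! (t - 1) = i" using surj by blast
        have "y t \<le> y s" using ymono t by simp
        thus "Y i \<le> y s" using t yY[of t] by auto
      qed
      thus ?thesis unfolding lS m q_def using ns by (intro exI[of _ 0] exI[of _ "y s"]) auto
    qed
  qed
qed

end

context rcr begin

lemma CC_formula: assumes a: "a \<subseteq> {1..n}" and x: "x \<le> r div 2"
  shows "int (CC a x) = 2 * int ((n + d - 1) div d) - int x - 2 * leap1 n d r a x"
proof -
  define q where "q = int ((n + d - 1) div d)"
  define lp where "lp = leap1 n d r a x"
  define M where "M = max (int x) (int ((n - 1) div d))"
  have xr: "x < r" using x r3 by linarith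
  have Y_le: "\<forall>i\<in>a. Y i \<le> int ((n - 1) div d)"
  proof
    fix i assume "i \<in> a"
    hence "i \<le> n" using a by auto
    hence "(i - 1) div d \<le> (n - 1) div d" by (intro div_le_mono) simp
    thus "Y i \<le> int ((n - 1) div d)" unfolding Y_def by simp
  qed
  have B1: "q - M \<le> lp"
    using leap_props(1)[OF a, where lo=0 and hi=M] Y_le unfolding q_def lp_def M_def by force
  have "2 * x \<le> r" using x by linarith
  moreover have "2 * ((n - 1) div d) < r"
  proof -
    have "d * ((n - 1) div d) \<le> n - 1" by simp
    hence "d * (2 * ((n - 1) div d)) < d * r" using big n2 by linarith
    thus ?thesis by simp
  qed
  ultimately have B2: "2 * M \<le> int r" unfolding M_def by linarith
  obtain lo hi where lh: "lo \<le> 0" "int x \<le> hi" "hi - lo = q - lp"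
    "\<forall>i\<in>a. Y i \<le> hi \<or> int r + lo \<le> Z i"
    using leap_props(2)[OF a] unfolding q_def lp_def by blast
  have "valid a x lo hi (int x)" unfolding valid_def
  proof (intro conjI ballI)
    fix i assume ia: "i \<in> a"
    hence i: "i \<in> {1..n}" using a by auto
    show "\<exists>p'. lo \<le> p' \<and> p' \<le> hi \<and> covers (nat (p' mod int r)) i"
    proof (cases "Y i \<le> hi")
      case True
      thus ?thesis using cov1[OF i] lh by (intro exI[of _ "Y i"]) auto
    next
      case False
      hence z: "int r + lo \<le> Z i" using lh ia by blast
      have "(Z i - int r) mod int r = Z i" using cov2(2,3)[OF i] by simp
      thus ?thesis using cov2[OF i] lh z by (intro exI[of _ "Z i - int r"]) auto
    qed
  qed (use lh xr in auto)
  moreover have "2 * (hi - lo) - \<bar>int x\<bar> = 2 * q - int x - 2 * lp" using lh by simp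
  ultimately have ub: "valid a x lo hi (int x)" "2 * (hi - lo) - \<bar>int x\<bar> = 2 * q - int x - 2 * lp" by auto
  have "int (CC a x) = 2 * q - int x - 2 * lp"
  proof (rule CC_eqI[OF a xr _ ub])
    fix lo hi p assume v: "valid a x lo hi p"
    have h: "lo \<le> 0" "0 \<le> hi" "lo \<le> p" "p \<le> hi" and px: "p mod int r = int x"
      and cv: "\<forall>i\<in>a. \<exists>p'. lo \<le> p' \<and> p' \<le> hi \<and> covers (nat (p' mod int r)) i"
      using v unfolding valid_def by auto
    show "2 * q - int x - 2 * lp \<le> 2 * (hi - lo) - \<bar>p\<bar>"
    proof (cases "p = int x")
      case px': True
      show ?thesis
      proof (cases "int r \<le> hi - lo")
        case True
        moreover have "\<bar>p\<bar> = int x" using px' by simp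
        moreover have "0 \<le> M" unfolding M_def by simp
        ultimately show ?thesis using B1 B2 by simp
      next
        case False
        have cond: "\<forall>i\<in>a. Y i \<le> hi \<or> int r + lo \<le> Z i"
        proof
          fix i assume ia: "i \<in> a"
          hence i: "i \<in> {1..n}" using a by auto
          obtain p' where p': "lo \<le> p'" "p' \<le> hi" "covers (nat (p' mod int r)) i" using cv ia by blast
          show "Y i \<le> hi \<or> int r + lo \<le> Z i"
          proof (cases "0 \<le> p'")
            case True
            have "p' < int r" using False p' h by linarith
            hence "p' mod int r = p'" using True by simp
            hence cvp: "covers (nat p') i" using p'(3) by simp
            have "nat p' < r" using \<open>p' < int r\<close> True by linarith
            have "Y i \<le> int (nat p')" by (rule cov3(1)[OF cvp \<open>nat p' < r\<close> i])
            thus ?thesis using True p' by simp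
          next
            case neg: False
            have ge: "0 \<le> p' + int r" using False p' h by linarith
            have lt: "p' + int r < int r" using neg by simp
            have "p' mod int r = (p' + int r) mod int r" by simp
            also have "\<dots> = p' + int r" using ge lt by (rule mod_pos_pos_trivial)
            finally have "covers (nat (p' + int r)) i" using p'(3) by simp
            moreover have "nat (p' + int r) < r" using ge lt by linarith
            ultimately have "int (nat (p' + int r)) \<le> Z i" using cov3(2) i by blast
            thus ?thesis using ge p' by simp
          qed
        qed
        have "q - (hi - lo) \<le> lp"
          using leap_props(1)[OF a h(1) _ cond] h(4) px' unfolding q_def lp_def by simp
        thus ?thesis using px' by simp
      qed
    next
      case False
      have pe: "p = int r * (p div int r) + int x" using px by (metis div_mult_mod_eq mult.commute)
      have "p div int r \<noteq> 0" using False pe by auto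
      hence "1 \<le> \<bar>p div int r\<bar>" by simp
      hence "int r * 1 \<le> int r * \<bar>p div int r\<bar>" by (intro mult_left_mono) auto
      hence "int r \<le> \<bar>p - int x\<bar>" using pe by (simp add: abs_mult)
      hence "int r - int x \<le> \<bar>p\<bar>" by linarith
      moreover have "\<bar>p\<bar> \<le> hi - lo" using h by linarith
      ultimately show ?thesis using B1 B2 by arith
    qed
  qed
  thus ?thesis unfolding q_def lp_def .
qed

end

theorem mainTheorem8:
  fixes n d r x :: nat and a :: "nat set"
  assumes "n \<ge> 2" and "d \<ge> 1" and "r \<ge> 3" and "n \<ge> d"
    and "(d * r) mod n = 0" and "d * r \<ge> 2 * n"
    and "a \<subseteq> {1..n}" and "x \<le> r div 2"
  shows "int (rcr_dist n d r ({}, 0) (a, x))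
           = int (card a) + 2 * int ((n + d - 1) div d) - int x - 2 * leap1 n d r a x"
proof -
  interpret rcr n d r by unfold_locales (use assms in auto)
  have xr: "x < r" using assms(3,8) by linarith
  have "is_vertex n r (a, x)" unfolding is_vertex_def using assms(7) xr by simp
  hence "rcr_dist n d r ({}, 0) (a, x) = ff (a, x)" by (rule dist_ff)
  thus ?thesis using CC_formula[OF assms(7,8)] unfolding ff_def by simp
qed


end
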